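(* Let $p$ be a prime number of the form $p = 5m^2 + 4mn + 9n^2$ with integers $m, n$. Then the equation $p x^4 - 41 y^4 = z^2$ has no rational solutions $(x,y,z)$ other than the trivial solution $x=y=z=0$. *)

theory Defs
  imports Complex_Main "HOL-Computational_Algebra.Primes"
begin

end

theory Submission
  imports Defs "HOL-Number_Theory.Number_Theory"
begin

lemma leg_range: "Legendre a p \<in> {-1,0,1}"
  by (simp add: Legendre_def)

lemma leg_zero_iff: "Legendre a p = 0 \<longleftrightarrow> [a = 0] (mod p)"
  by (simp add: Legendre_def)

lemma small_dvd:
  fixes d n :: int
  assumes "n dvd d" "\<bar>d\<bar> < n"
  shows "d = 0"
proof (rule ccontr)
  assume "d \<noteq> 0"
  then have "\<bar>d\<bar> > 0" by simp
  moreover have "n dvd \<bar>d\<bar>" using assms(1) by simp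
  ultimately have "n \<le> \<bar>d\<bar>" by (rule zdvd_imp_le[rotated])
  then show False using assms(2) by simp
qed

lemma leg_eq:
  assumes "prime p" "2 < p" "l \<in> {-1,0,1}" "[l = a^((p-1) div 2)] (mod int p)"
  shows "Legendre a (int p) = l"
proof -
  have "[Legendre a (int p) = a^((p-1) div 2)] (mod int p)"
    using euler_criterion assms by blast
  then have c: "[Legendre a (int p) = l] (mod int p)"
    using assms(4) by (meson cong_sym cong_trans)
  then have d: "int p dvd Legendre a (int p) - l"
    by (simp add: cong_iff_dvd_diff)
  have r: "Legendre a (int p) \<in> {-1,0,1}" by (rule leg_range)
  have "Legendre a (int p) - l \<in> {-2,-1,0,1,2}" using r assms(3) by auto
  moreover have "int p \<ge> 3" using assms(2) by simp
  ultimately have "\<bar>Legendre a (int p) - l\<bar> < int p" by auto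
  then have "Legendre a (int p) - l = 0" using small_dvd d by blast
  then show ?thesis by simp
qed

lemma leg_mult:
  assumes "prime p" "2 < p"
  shows "Legendre (a*b) (int p) = Legendre a (int p) * Legendre b (int p)"
proof (rule leg_eq[OF assms])
  show "Legendre a (int p) * Legendre b (int p) \<in> {-1,0,1}"
    using leg_range[of a "int p"] leg_range[of b "int p"] by auto
  have "[Legendre a (int p) = a^((p-1) div 2)] (mod int p)"
       "[Legendre b (int p) = b^((p-1) div 2)] (mod int p)"
    using euler_criterion assms by blast+
  then have "[Legendre a (int p) * Legendre b (int p) = a^((p-1) div 2) * b^((p-1) div 2)] (mod int p)"
    by (rule cong_mult)
  then show "[Legendre a (int p) * Legendre b (int p) = (a*b)^((p-1) div 2)] (mod int p)"
    by (simp add: power_mult_distrib)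
qed

lemma leg_cong:
  assumes "prime p" "2 < p" "[a = b] (mod int p)"
  shows "Legendre a (int p) = Legendre b (int p)"
proof (rule leg_eq[OF assms(1,2)])
  show "Legendre b (int p) \<in> {-1,0,1}" by (rule leg_range)
  have "[Legendre b (int p) = b^((p-1) div 2)] (mod int p)"
    using euler_criterion assms by blast
  moreover have "[b^((p-1) div 2) = a^((p-1) div 2)] (mod int p)"
    using assms(3) by (simp add: cong_pow cong_sym)
  ultimately show "[Legendre b (int p) = a^((p-1) div 2)] (mod int p)"
    by (rule cong_trans)
qed

lemma p5: "prime (5::nat)" by simp
lemma p41: "prime (41::nat)" by simp

lemma leg_13_41: "Legendre 13 41 = -1"
  using leg_eq[OF p41, of "-1" 13] by (simp add: cong_def)
lemma leg_m13_41: "Legendre (-13) 41 = -1"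
  using leg_eq[OF p41, of "-1" "-13"] by (simp add: cong_def)
lemma leg_m1_41: "Legendre (-1) 41 = 1"
  using leg_eq[OF p41, of "1" "-1"] by (simp add: cong_def)
lemma leg_2_41: "Legendre 2 41 = 1"
  using leg_eq[OF p41, of "1" "2"] by (simp add: cong_def)
lemma leg_2_5: "Legendre 2 5 = -1"
  using leg_eq[OF p5, of "-1" "2"] by (simp add: cong_def)
lemma leg_m2_5: "Legendre (-2) 5 = -1"
  using leg_eq[OF p5, of "-1" "-2"] by (simp add: cong_def)
lemma leg_m1_5: "Legendre (-1) 5 = 1"
  using leg_eq[OF p5, of "1" "-1"] by (simp add: cong_def)

lemma leg_pm1:
  assumes "\<not> [a = 0] (mod p)"
  shows "Legendre a p = 1 \<or> Legendre a p = -1"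
  using assms by (auto simp: Legendre_def)

lemma recip:
  assumes "prime p" "2 < p" "prime q" "2 < q" "p \<noteq> q" "even ((p - 1) div 2 * ((q - 1) div 2))"
  shows "Legendre (int p) (int q) = Legendre (int q) (int p)"
proof -
  have pr: "Legendre (int p) (int q) * Legendre (int q) (int p) = 1"
    using Quadratic_Reciprocity[OF assms(1-5)] assms(6) by simp
  have n1: "\<not> [int p = 0] (mod int q)"
    using assms by (metis cong_0_iff int_dvd_int_iff prime_nat_iff primes_dvd_imp_eq)
  have n2: "\<not> [int q = 0] (mod int p)"
    using assms by (metis cong_0_iff int_dvd_int_iff prime_nat_iff primes_dvd_imp_eq)
  show ?thesis using leg_pm1[OF n1] leg_pm1[OF n2] pr by auto
qed

lemma mult_closure:
  fixes f :: "int \<Rightarrow> int"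
  assumes mult: "\<And>a b. f (a*b) = f a * f b" and one: "f 1 = 1"
    and pos: "n > 0" and pr: "\<And>q. prime q \<Longrightarrow> q dvd n \<Longrightarrow> f q = 1"
  shows "f n = 1"
proof -
  obtain k where nk: "n = int k" using pos by (metis zero_le_imp_eq_int less_imp_le)
  have "\<forall>n. n = int k \<longrightarrow> n > 0 \<longrightarrow> (\<forall>q. prime q \<longrightarrow> q dvd n \<longrightarrow> f q = 1) \<longrightarrow> f n = 1"
  proof (induction k rule: less_induct)
    case (less k)
    show ?case
    proof (intro allI impI)
      fix n assume n: "n = int k" "n > 0" and h: "\<forall>q. prime q \<longrightarrow> q dvd n \<longrightarrow> f q = 1"
      show "f n = 1"
      proof (cases "k = 1")
        case True then show ?thesis using n one by simp
      next
        case False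
        then obtain q where q: "prime q" "q dvd k" using prime_factor_nat by blast
        then obtain j where j: "k = q * j" by blast
        have "k > 0" using n by simp
        then have jpos: "j > 0" using j by (cases j) auto
        have q1: "q > 1" using q prime_gt_1_nat by blast
        have jk: "j < k" using j jpos q1 by simp
        have fq: "f (int q) = 1" using h q n by (simp add: prime_nat_iff_prime)
        have fj: "f (int j) = 1"
        proof -
          have "\<forall>r. prime r \<longrightarrow> r dvd int j \<longrightarrow> f r = 1"
            using h n j by (metis dvd_mult_left of_nat_mult dvd_trans dvd_triv_right)
          then show ?thesis using less.IH[OF jk] jpos by simp
        qed
        have "n = int q * int j" using n j by simp
        then show ?thesis using mult fq fj by simp
      qed
    qed
  qed
  then show ?thesis using nk pos pr by blast
qed

lemma leg_abs:
  assumes "prime p" "2 < p" "Legendre (-1) (int p) = 1"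
  shows "Legendre \<bar>a\<bar> (int p) = Legendre a (int p)"
proof (cases "a \<ge> 0")
  case True then show ?thesis by simp
next
  case False
  then have "\<bar>a\<bar> = (-1) * a" by simp
  then show ?thesis using leg_mult[OF assms(1,2), of "-1" a] assms(3) by simp
qed

lemma sq_mod8: "(z::int)^2 mod 8 = ((z mod 8)^2) mod 8"
  by (simp add: power_mod)

lemma odd_sq_mod8: "odd (z::int) \<Longrightarrow> z^2 mod 8 = 1"
proof -
  assume "odd z"
  then have "z mod 8 = 1 \<or> z mod 8 = 3 \<or> z mod 8 = 5 \<or> z mod 8 = 7" by presburger
  then show ?thesis by (subst sq_mod8) auto
qed

lemma parity_uv:
  fixes u v T :: int
  assumes eq: "u^2 + 41*v^2 = 5*T^2" and cop: "coprime u v" and odd: "odd T"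
  shows "(odd u \<and> v mod 4 = 2) \<or> (u mod 4 = 2 \<and> odd v)"
proof -
  define a i b j where "a = u div 8" "i = u mod 8" "b = v div 8" "j = v mod 8"
  have ui: "u = 8*a + i" "v = 8*b + j" unfolding a_i_b_j_def by simp_all
  have h8: "\<And>K R::int. (8*K + R) mod 8 = R mod 8" by presburger
  have ee: "u^2 + 41*v^2 = 8*(8*a^2+2*a*i + 41*(8*b^2+2*b*j)) + (i^2 + 41*j^2)"
    unfolding ui by (simp add: algebra_simps power2_eq_square)
  have m1: "(u^2 + 41*v^2) mod 8 = (i^2 + 41*j^2) mod 8" by (subst ee, rule h8)
  define c where "c = T^2 div 8"
  have c: "T^2 = 8*c + 1" using div_mult_mod_eq[of "T^2" 8] odd_sq_mod8[OF odd] unfolding c_def by linarith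
  have "5*T^2 = 8*(5*c) + 5" using c by simp
  then have "(5*T^2) mod 8 = 5" using h8[of "5*c" 5] by simp
  then have e: "((u mod 8)^2 + 41*(v mod 8)^2) mod 8 = 5" using m1 eq a_i_b_j_def by simp
  have ne: "\<not> (even u \<and> even v)" using cop coprime_common_divisor[of u v 2] by auto
  have fin: "\<forall>i\<in>{0,1,2,3,4,5,6,7::int}. \<forall>j\<in>{0,1,2,3,4,5,6,7::int}.
     (i^2 + 41*j^2) mod 8 = 5 \<longrightarrow> \<not> (even i \<and> even j) \<longrightarrow>
     (odd i \<and> j mod 4 = 2) \<or> (i mod 4 = 2 \<and> odd j)"
    by simp
  have u8: "u mod 8 \<in> {0,1,2,3,4,5,6,7}" by auto
  have v8: "v mod 8 \<in> {0,1,2,3,4,5,6,7}" by auto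
  have uu: "u mod 4 = (u mod 8) mod 4" "v mod 4 = (v mod 8) mod 4"
    by (simp_all add: mod_mod_cancel)
  have ev: "even u = even (u mod 8)" "even v = even (v mod 8)"
    by presburger+
  have "(odd (u mod 8) \<and> (v mod 8) mod 4 = 2) \<or> ((u mod 8) mod 4 = 2 \<and> odd (v mod 8))"
    using bspec[OF bspec[OF fin u8] v8] e ne ev by simp
  then show ?thesis using uu ev by simp
qed

lemma leg_sq:
  assumes "prime p" "2 < p" "\<not> int p dvd a"
  shows "Legendre (a^2) (int p) = 1"
proof -
  have "\<not> [a = 0] (mod int p)" using assms(3) by (simp add: cong_0_iff)
  then have "Legendre a (int p) = 1 \<or> Legendre a (int p) = -1" by (rule leg_pm1)
  then show ?thesis using leg_mult[OF assms(1,2), of a a] by (auto simp: power2_eq_square)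
qed

lemma int_prime_dvd_sq: "prime (q::int) \<Longrightarrow> q dvd a^2 \<Longrightarrow> q dvd a"
  using prime_dvd_power by blast

lemma primes_v:
  fixes u v T :: int and q :: nat
  assumes eq: "u^2 + 41*v^2 = 5*T^2" and cop: "coprime u v"
    and q: "prime q" "2 < q" "int q dvd v"
  shows "Legendre (int q) 5 = 1"
proof -
  have qi: "prime (int q)" using q by simp
  have nu: "\<not> int q dvd u"
  proof
    assume "int q dvd u"
    then have "is_unit (int q)" using cop q(3) coprime_common_divisor by blast
    then show False using q by simp
  qed
  have n5: "q \<noteq> 5"
  proof
    assume "q = 5"
    then have "5 dvd v" using q by simp
    then obtain v' where v': "v = 5*v'" by auto
    have "u^2 = 5*(T^2 - 41*5*v'^2)" using eq v' by (simp add: algebra_simps power2_eq_square)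
    then have "5 dvd u^2" by (metis dvd_triv_left)
    then have "5 dvd u" using int_prime_dvd_sq[of 5 u] by simp
    then show False using nu \<open>q = 5\<close> by simp
  qed
  have nT: "\<not> int q dvd T"
  proof
    assume "int q dvd T"
    then obtain T' where T': "T = int q * T'" by auto
    obtain v' where v': "v = int q * v'" using q(3) by auto
    have "u^2 = int q * (5 * int q * T'^2 - 41 * int q * v'^2)"
      using eq T' v' by (simp add: algebra_simps power2_eq_square)
    then have "int q dvd u^2" by (metis dvd_triv_left)
    then show False using nu int_prime_dvd_sq[OF qi] by blast
  qed
  have cg: "[u^2 = 5*T^2] (mod int q)"
  proof -
    obtain v' where v': "v = int q * v'" using q(3) by auto
    have "5*T^2 - u^2 = int q * (41 * int q * v'^2)"
      using eq v' by (simp add: algebra_simps power2_eq_square)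
    then have "int q dvd 5*T^2 - u^2" by (metis dvd_triv_left)
    then have "[5*T^2 = u^2] (mod int q)" by (simp add: cong_iff_dvd_diff)
    then show ?thesis by (rule cong_sym)
  qed
  have "Legendre (u^2) (int q) = Legendre (5*T^2) (int q)" using leg_cong[OF q(1,2) cg] .
  then have "1 = Legendre 5 (int q) * 1"
    using leg_sq[OF q(1,2) nu] leg_sq[OF q(1,2) nT] leg_mult[OF q(1,2), of 5 "T^2"] by simp
  then have "Legendre (int 5) (int q) = 1" by simp
  moreover have "Legendre (int 5) (int q) = Legendre (int q) (int 5)"
    by (rule recip) (use q n5 in auto)
  ultimately show ?thesis by simp
qed

lemma primes_u:
  fixes u v T :: int and q :: nat
  assumes eq: "u^2 + 41*v^2 = 5*T^2" and cop: "coprime u v"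
    and q: "prime q" "2 < q" "int q dvd u"
  shows "Legendre (int q) 5 * Legendre (int q) 41 = 1"
proof -
  have qi: "prime (int q)" using q by simp
  have nv: "\<not> int q dvd v"
  proof
    assume "int q dvd v"
    then have "is_unit (int q)" using cop q(3) coprime_common_divisor by blast
    then show False using q by simp
  qed
  have n41: "q \<noteq> 41"
  proof
    assume "q = 41"
    then obtain u' where u': "u = 41*u'" using q by auto
    have "5*T^2 = 41*(41*u'^2 + v^2)" using eq u' by (simp add: algebra_simps power2_eq_square)
    then have "41 dvd 5*T^2" by (metis dvd_triv_left)
    then have "41 dvd T^2" using prime_dvd_mult_iff[of "41::int" 5 "T^2"] by simp
    then have "41 dvd T" using int_prime_dvd_sq[of 41 T] by simp
    then obtain T' where T': "T = 41*T'" by auto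
    have "v^2 = 41*(5*T'^2 - u'^2)" using eq u' T' by (simp add: algebra_simps power2_eq_square)
    then have "41 dvd v^2" by simp
    then have "41 dvd v" using int_prime_dvd_sq[of 41 v] by simp
    then show False using nv \<open>q = 41\<close> by simp
  qed
  have n5: "q \<noteq> 5"
  proof
    assume "q = 5"
    then obtain u' where u': "u = 5*u'" using q by auto
    have "41*v^2 = 5*(T^2 - 5*u'^2)" using eq u' by (simp add: algebra_simps power2_eq_square)
    then have "5 dvd 41*v^2" by (metis dvd_triv_left)
    then have "5 dvd v^2" using prime_dvd_mult_iff[of "5::int" 41 "v^2"] by simp
    then have "5 dvd v" using int_prime_dvd_sq[of 5 v] by simp
    then show False using nv \<open>q = 5\<close> by simp
  qed
  have nT: "\<not> int q dvd T"
  proof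
    assume "int q dvd T"
    then obtain T' where T': "T = int q * T'" by auto
    obtain u' where u': "u = int q * u'" using q(3) by auto
    have "41*v^2 = int q * (5 * int q * T'^2 - int q * u'^2)"
      using eq T' u' by (simp add: algebra_simps power2_eq_square)
    then have "int q dvd 41*v^2" by (metis dvd_triv_left)
    then have "int q dvd 41 \<or> int q dvd v^2" using qi prime_dvd_mult_iff by blast
    moreover have "\<not> int q dvd 41"
    proof
      assume "int q dvd 41"
      then have "q dvd 41" by presburger
      then have "q = 1 \<or> q = 41" using prime_nat_iff[of "41::nat"] by simp
      then show False using n41 q by auto
    qed
    ultimately show False using nv int_prime_dvd_sq[OF qi] by blast
  qed
  have cg: "[41*v^2 = 5*T^2] (mod int q)"
  proof -
    obtain u' where u': "u = int q * u'" using q(3) by auto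
    have "5*T^2 - 41*v^2 = int q * (int q * u'^2)"
      using eq u' by (simp add: algebra_simps power2_eq_square)
    then have "int q dvd 5*T^2 - 41*v^2" by (metis dvd_triv_left)
    then have "[5*T^2 = 41*v^2] (mod int q)" by (simp add: cong_iff_dvd_diff)
    then show ?thesis by (rule cong_sym)
  qed
  have "Legendre (41*v^2) (int q) = Legendre (5*T^2) (int q)" using leg_cong[OF q(1,2) cg] .
  then have e: "Legendre 41 (int q) = Legendre 5 (int q)"
    using leg_sq[OF q(1,2) nv] leg_sq[OF q(1,2) nT] leg_mult[OF q(1,2), of 5 "T^2"]
      leg_mult[OF q(1,2), of 41 "v^2"] by simp
  have "\<not> [5 = 0] (mod int q)"
  proof
    assume "[5 = 0] (mod int q)"
    then have "q dvd 5" by (simp add: cong_0_iff) presburger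
    then have "q = 1 \<or> q = 5" using prime_nat_iff[of "5::nat"] by simp
    then show False using n5 q by auto
  qed
  then have "Legendre 5 (int q) = 1 \<or> Legendre 5 (int q) = -1" by (rule leg_pm1)
  then have "Legendre (int 5) (int q) * Legendre (int 41) (int q) = 1" using e by auto
  moreover have "Legendre (int 5) (int q) = Legendre (int q) (int 5)"
    by (rule recip) (use q n5 in auto)
  moreover have "Legendre (int 41) (int q) = Legendre (int q) (int 41)"
    by (rule recip) (use q n41 in auto)
  ultimately show ?thesis by simp
qed

lemma leg_1_5: "Legendre 1 5 = 1"
  using leg_eq[OF p5, of "1" "1"] by (simp add: cong_def)
lemma leg_1_41: "Legendre 1 41 = 1"
  using leg_eq[OF p41, of "1" "1"] by (simp add: cong_def)

lemma leg5_mult: "Legendre (a*b) 5 = Legendre a 5 * Legendre b 5"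
  using leg_mult[OF p5, of a b] by simp
lemma leg41_mult: "Legendre (a*b) 41 = Legendre a 41 * Legendre b 41"
  using leg_mult[OF p41, of a b] by simp

lemma leg5_cong: "[a = b] (mod 5) \<Longrightarrow> Legendre a 5 = Legendre b 5"
  using leg_cong[OF p5, of a b] by simp
lemma leg41_cong: "[a = b] (mod 41) \<Longrightarrow> Legendre a 41 = Legendre b 41"
  using leg_cong[OF p41, of a b] by simp

lemma odd_prime_nat:
  assumes "prime (q::int)" "q dvd w" "odd w"
  shows "prime (nat q) \<and> 2 < nat q \<and> int (nat q) = q"
proof -
  have q0: "q > 1" using assms(1) prime_gt_1_int by blast
  have "q \<noteq> 2"
  proof
    assume "q = 2" then show False using assms(2,3) by simp
  qed
  then have "q > 2" using q0 by simp
  moreover have "prime (nat q)" using assms(1) by simp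
  ultimately show ?thesis using q0 by simp
qed

lemma clos_v:
  fixes u v T w :: int
  assumes eq: "u^2 + 41*v^2 = 5*T^2" and cop: "coprime u v"
    and w: "odd w" "w dvd v"
  shows "Legendre w 5 = 1"
proof -
  have "Legendre \<bar>w\<bar> 5 = 1"
  proof (rule mult_closure[where f = "\<lambda>n. Legendre n 5"])
    show "\<And>a b. Legendre (a*b) 5 = Legendre a 5 * Legendre b 5" by (rule leg5_mult)
    show "Legendre 1 5 = 1" by (rule leg_1_5)
    show "\<bar>w\<bar> > 0" using w by auto
    fix q :: int assume q: "prime q" "q dvd \<bar>w\<bar>"
    then have qw: "q dvd w" by simp
    from odd_prime_nat[OF q(1) qw w(1)] have qq: "prime (nat q)" "2 < nat q" "int (nat q) = q" by auto
    have "int (nat q) dvd v" using qq(3) qw w(2) by (metis dvd_trans)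
    from primes_v[OF eq cop qq(1,2) this] qq(3) show "Legendre q 5 = 1" by simp
  qed
  then show ?thesis using leg_abs[OF p5] leg_m1_5 by simp
qed

lemma clos_u:
  fixes u v T w :: int
  assumes eq: "u^2 + 41*v^2 = 5*T^2" and cop: "coprime u v"
    and w: "odd w" "w dvd u"
  shows "Legendre w 5 * Legendre w 41 = 1"
proof -
  have "Legendre \<bar>w\<bar> 5 * Legendre \<bar>w\<bar> 41 = 1"
  proof (rule mult_closure[where f = "\<lambda>n. Legendre n 5 * Legendre n 41"])
    show "\<And>a b. Legendre (a*b) 5 * Legendre (a*b) 41 = (Legendre a 5 * Legendre a 41) * (Legendre b 5 * Legendre b 41)"
      by (simp add: leg5_mult leg41_mult)
    show "Legendre 1 5 * Legendre 1 41 = 1" by (simp add: leg_1_5 leg_1_41)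
    show "\<bar>w\<bar> > 0" using w by auto
    fix q :: int assume q: "prime q" "q dvd \<bar>w\<bar>"
    then have qw: "q dvd w" by simp
    from odd_prime_nat[OF q(1) qw w(1)] have qq: "prime (nat q)" "2 < nat q" "int (nat q) = q" by auto
    have "int (nat q) dvd u" using qq(3) qw w(2) by (metis dvd_trans)
    from primes_u[OF eq cop qq(1,2) this] qq(3) show "Legendre q 5 * Legendre q 41 = 1" by simp
  qed
  then show ?thesis using leg_abs[OF p5] leg_m1_5 leg_abs[OF p41] leg_m1_41 by simp
qed

lemma prime_factor_cases:
  fixes a b :: int
  assumes "prime (p::int)" "p dvd a * b"
  shows "p dvd a \<or> p dvd b"
  using assms prime_dvd_mult_iff by blast

lemma leg_u_41:
  fixes u v T :: int
  assumes eq: "u^2 + 41*v^2 = 5*T^2" and cop: "coprime u v" and odd: "odd T"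
  shows "Legendre u 41 = 1"
proof -
  have "(u - 2*v)*(u + 2*v) = 5*(T^2 - 9*v^2)"
    using eq by (simp add: algebra_simps power2_eq_square)
  then have "(5::int) dvd (u - 2*v)*(u + 2*v)" by (metis dvd_triv_left)
  then have "5 dvd (u - 2*v) \<or> 5 dvd (u + 2*v)" by (rule prime_factor_cases[rotated]) simp
  then have "[u = 2*v] (mod 5) \<or> [u = (-2)*v] (mod 5)"
    by (auto simp: cong_iff_dvd_diff)
  then have "Legendre u 5 = Legendre (2*v) 5 \<or> Legendre u 5 = Legendre ((-2)*v) 5"
    using leg5_cong by blast
  moreover have "Legendre (2*v) 5 = - Legendre v 5" using leg5_mult[of 2 v] leg_2_5 by simp
  moreover have "Legendre ((-2)*v) 5 = - Legendre v 5" using leg5_mult[of "-2" v] leg_m2_5 by simp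
  ultimately have hu5: "Legendre u 5 = - Legendre v 5" by auto
  from parity_uv[OF eq cop odd] show ?thesis
  proof
    assume A: "odd u \<and> v mod 4 = 2"
    have "v = 2*(v div 2) \<and> odd (v div 2)" using A by presburger
    then obtain v1 where v1: "v = 2*v1" "odd v1" by blast
    have "Legendre v1 5 = 1" using clos_v[OF eq cop v1(2)] v1(1) by simp
    then have "Legendre v 5 = -1" using v1(1) leg5_mult leg_2_5 by simp
    then have "Legendre u 5 = 1" using hu5 by simp
    moreover have "Legendre u 5 * Legendre u 41 = 1" using clos_u[OF eq cop] A by simp
    ultimately show ?thesis by simp
  next
    assume B: "u mod 4 = 2 \<and> odd v"
    have "u = 2*(u div 2) \<and> odd (u div 2)" using B by presburger
    then obtain u1 where u1: "u = 2*u1" "odd u1" by blast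
    have "Legendre v 5 = 1" using clos_v[OF eq cop] B by simp
    then have "Legendre u 5 = -1" using hu5 by simp
    then have "Legendre u1 5 = 1" using u1(1) leg5_mult leg_2_5 by simp
    moreover have "Legendre u1 5 * Legendre u1 41 = 1" using clos_u[OF eq cop u1(2)] u1(1) by simp
    ultimately have "Legendre u1 41 = 1" by simp
    then show ?thesis using u1(1) leg41_mult leg_2_41 by simp
  qed
qed

lemma lemC:
  fixes u v T :: int
  assumes eq: "u^2 + 41*v^2 = 5*T^2" and cop: "coprime u v" and odd: "odd T"
  shows "\<not> QuadRes 41 T"
proof
  assume "QuadRes 41 T"
  then obtain y where y: "[y^2 = T] (mod 41)" unfolding QuadRes_def by blast
  then have "41 dvd y^2 - T" by (simp add: cong_iff_dvd_diff)
  then obtain j where "y^2 - T = 41*j" by blast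
  then have k: "T = y^2 + 41*(-j)" by simp
  define k where "k = -j"
  have k: "T = y^2 + 41*k" using k k_def by simp
  have n41T: "\<not> 41 dvd T"
  proof
    assume "41 dvd T"
    then obtain T' where T': "T = 41*T'" by blast
    have "u^2 = 41*(5*41*T'^2 - v^2)" using eq T' by (simp add: algebra_simps power2_eq_square)
    then have "41 dvd u^2" by (metis dvd_triv_left)
    then have "41 dvd u" using int_prime_dvd_sq[of 41 u] by simp
    then obtain u' where u': "u = 41*u'" by blast
    have "v^2 = 41*(5*T'^2 - u'^2)" using eq T' u' by (simp add: algebra_simps power2_eq_square)
    then have "41 dvd v^2" by (metis dvd_triv_left)
    then have "41 dvd v" using int_prime_dvd_sq[of 41 v] by simp
    then have "is_unit (41::int)" using \<open>41 dvd u\<close> cop coprime_common_divisor by blast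
    then show False by simp
  qed
  have ny: "\<not> int 41 dvd y"
  proof
    assume "int 41 dvd y"
    then obtain y' where "y = 41*y'" by auto
    then have "T = 41*(41*y'^2 + k)" using k by (simp add: algebra_simps power2_eq_square)
    then show False using n41T by (metis dvd_triv_left)
  qed
  have u2: "u^2 = 5*T^2 - 41*v^2" using eq by simp
  have "(u - 13*y^2)*(u + 13*y^2) = u^2 - 169*y^4"
    by (simp add: algebra_simps power2_eq_square power4_eq_xxxx)
  also have "\<dots> = 5*T^2 - 41*v^2 - 169*y^4" using u2 by simp
  also have "\<dots> = 41*(10*k*y^2 + 205*k^2 - 4*y^4 - v^2)"
    unfolding k by (simp add: algebra_simps power2_eq_square power4_eq_xxxx)
  finally have "(41::int) dvd (u - 13*y^2)*(u + 13*y^2)" by (metis dvd_triv_left)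
  then have "41 dvd (u - 13*y^2) \<or> 41 dvd (u + 13*y^2)" by (rule prime_factor_cases[rotated]) simp
  then have "[u = 13*y^2] (mod 41) \<or> [u = (-13)*y^2] (mod 41)"
    by (auto simp: cong_iff_dvd_diff)
  then have "Legendre u 41 = Legendre (13*y^2) 41 \<or> Legendre u 41 = Legendre ((-13)*y^2) 41"
    using leg41_cong by blast
  moreover have "Legendre (y^2) 41 = 1" using leg_sq[OF p41 _ ny] by simp
  then have "Legendre (13*y^2) 41 = -1" "Legendre ((-13)*y^2) 41 = -1"
    using leg41_mult[of 13 "y^2"] leg41_mult[of "-13" "y^2"] leg_13_41 leg_m13_41 by simp_all
  ultimately have "Legendre u 41 = -1" by auto
  then show False using leg_u_41[OF eq cop odd] by simp
qed

lemma dvd5_cases: "(d::int) dvd 5 \<Longrightarrow> d \<ge> 0 \<Longrightarrow> d = 1 \<or> d = 5"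
proof -
  assume d: "d dvd 5" "d \<ge> 0"
  then have "d \<noteq> 0" by auto
  moreover have "d \<le> 5" using d zdvd_imp_le by simp
  ultimately have "d \<in> {1,2,3,4,5}" using d(2) by auto
  then show ?thesis using d(1) by auto
qed

lemma core:
  fixes p :: nat and a b Z W X :: int
  assumes pp: "prime p" and ab: "a^2 + 41*b^2 = 5*int p"
    and eq: "Z^2 + 41*W^2 = int p * (X^2)^2" and cop: "coprime Z W" and oddX: "odd X"
    and dv: "int p dvd a*W - b*Z"
  shows False
proof -
  define P where "P = int p"
  define T where "T = X^2"
  have pi: "prime P" using pp P_def by simp
  have P0: "P \<noteq> 0" using pi by auto
  have eq': "Z^2 + 41*W^2 = P*T^2" using eq P_def T_def by simp
  have oddT: "odd T" using oddX T_def by simp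
  have nW: "\<not> P dvd W"
  proof
    assume "P dvd W"
    then obtain W' where W': "W = P*W'" by blast
    have "Z^2 = P*(T^2 - 41*P*W'^2)" using eq' W' by (simp add: algebra_simps power2_eq_square)
    then have "P dvd Z^2" by (metis dvd_triv_left)
    then have "P dvd Z" using int_prime_dvd_sq[OF pi] by blast
    then have "is_unit P" using \<open>P dvd W\<close> cop coprime_common_divisor by blast
    then show False using prime_gt_1_int[OF pi] by simp
  qed
  obtain v where v: "a*W - b*Z = P*v" using dv P_def by blast
  have "W*(a*Z + 41*b*W) = Z*(a*W - b*Z) + b*(Z^2 + 41*W^2)"
    by (simp add: algebra_simps power2_eq_square)
  also have "\<dots> = P*(Z*v + b*T^2)" using v eq' by (simp add: algebra_simps)
  finally have "P dvd W*(a*Z + 41*b*W)" by (metis dvd_triv_left)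
  then have "P dvd a*Z + 41*b*W" using nW prime_factor_cases[OF pi] by blast
  then obtain u where u: "a*Z + 41*b*W = P*u" by blast
  have "P^2*(u^2 + 41*v^2) = (P*u)^2 + 41*(P*v)^2"
    by (simp add: algebra_simps power2_eq_square)
  also have "\<dots> = (a*Z + 41*b*W)^2 + 41*(a*W - b*Z)^2" by (simp only: u v)
  also have "\<dots> = (a^2 + 41*b^2)*(Z^2 + 41*W^2)" by (simp add: algebra_simps power2_eq_square)
  also have "\<dots> = P^2*(5*T^2)" using ab eq' P_def by (simp add: algebra_simps power2_eq_square)
  finally have uv: "u^2 + 41*v^2 = 5*T^2" using P0 by simp
  have "P*(a*u - 41*b*v) = a*(P*u) - 41*b*(P*v)" by (simp add: algebra_simps)
  also have "\<dots> = a*(a*Z + 41*b*W) - 41*b*(a*W - b*Z)" by (simp only: u v)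
  also have "\<dots> = (a^2 + 41*b^2)*Z" by (simp add: algebra_simps power2_eq_square)
  also have "\<dots> = P*(5*Z)" using ab P_def by simp
  finally have i1: "a*u - 41*b*v = 5*Z" using P0 by simp
  have "P*(a*v + b*u) = a*(P*v) + b*(P*u)" by (simp add: algebra_simps)
  also have "\<dots> = a*(a*W - b*Z) + b*(a*Z + 41*b*W)" by (simp only: u v)
  also have "\<dots> = (a^2 + 41*b^2)*W" by (simp add: algebra_simps power2_eq_square)
  also have "\<dots> = P*(5*W)" using ab P_def by simp
  finally have i2: "a*v + b*u = 5*W" using P0 by simp
  have "gcd u v dvd 5*Z" using i1[symmetric] by simp
  moreover have "gcd u v dvd 5*W" using i2[symmetric] by simp
  ultimately have "gcd u v dvd gcd (5*Z) (5*W)" by simp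
  also have "gcd (5*Z) (5*W) = 5" using cop gcd_mult_distrib_int[of 5 Z W] by simp
  finally have "gcd u v = 1 \<or> gcd u v = 5" using dvd5_cases by simp
  then show False
  proof
    assume "gcd u v = 1"
    then have "coprime u v" by (simp add: coprime_iff_gcd_eq_1)
    from lemC[OF uv this oddT] show False
      unfolding QuadRes_def T_def by (metis cong_refl)
  next
    assume g5: "gcd u v = 5"
    then have "5 dvd u" "5 dvd v" by (metis gcd_dvd1, metis gcd_dvd2)
    then obtain u1 v1 where u1: "u = 5*u1" and v1: "v = 5*v1" by blast
    have "T^2 = 5*(u1^2 + 41*v1^2)" using uv u1 v1 by (simp add: algebra_simps power2_eq_square)
    then have "5 dvd T^2" by (metis dvd_triv_left)
    then have "5 dvd T" using int_prime_dvd_sq[of 5 T] by simp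
    then obtain T1 where T1: "T = 5*T1" by blast
    have uv1: "u1^2 + 41*v1^2 = 5*T1^2" using uv u1 v1 T1 by (simp add: algebra_simps power2_eq_square)
    have "5 * gcd u1 v1 = 5" using g5 u1 v1 gcd_mult_distrib_int[of 5 u1 v1] by simp
    then have "coprime u1 v1" by (simp add: coprime_iff_gcd_eq_1)
    moreover have "odd T1" using oddT T1 by simp
    ultimately have nq: "\<not> QuadRes 41 T1" using lemC[OF uv1] by blast
    have "(19*X)^2 - T1 = 41*(44*T1)" using T_def T1 by (simp add: algebra_simps power2_eq_square)
    then have "[(19*X)^2 = T1] (mod 41)" by (simp add: cong_iff_dvd_diff)
    then show False using nq unfolding QuadRes_def by blast
  qed
qed

lemma main_int:
  fixes p :: nat and m n X Y Z :: int
  assumes pp: "prime p" and pf: "int p = 5 * m^2 + 4 * m * n + 9 * n^2"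
    and eq: "int p * X^4 - 41*Y^4 = Z^2" and cop: "coprime X Y"
  shows False
proof -
  define P where "P = int p"
  have pi: "prime P" using pp P_def by simp
  have P1: "P > 1" using prime_gt_1_int[OF pi] .
  define a b where "a = 5*m + 2*n" "b = n"
  have ab: "a^2 + 41*b^2 = 5*int p" using pf unfolding a_b_def by (simp add: algebra_simps power2_eq_square)
  have eqP: "Z^2 + 41*(Y^2)^2 = P*(X^2)^2" using eq P_def by (simp add: algebra_simps power2_eq_square power4_eq_xxxx)
  have copZY: "coprime Z Y"
  proof (rule ccontr)
    assume nc: "\<not> coprime Z Y"
    have "\<bar>gcd Z Y\<bar> \<noteq> 1" using nc by (simp add: coprime_iff_gcd_eq_1)
    then obtain q where q: "prime q" "q dvd gcd Z Y" using prime_factor_int by blast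
    then have qZ: "q dvd Z" and qY: "q dvd Y" by auto
    have "q dvd P*(X^2)^2" unfolding eqP[symmetric] using qZ qY
      by (simp add: power2_eq_square)
    then have "q dvd P \<or> q dvd (X^2)^2" using prime_factor_cases[OF q(1)] by blast
    moreover have "\<not> q dvd (X^2)^2"
    proof
      assume "q dvd (X^2)^2"
      then have "q dvd X" using q(1) prime_dvd_power by blast
      then have "is_unit q" using qY cop coprime_common_divisor by blast
      then show False using prime_gt_1_int[OF q(1)] by simp
    qed
    ultimately have "q dvd P" by blast
    then have qP: "q = P" using q(1) pi primes_dvd_imp_eq by blast
    obtain Z' where Z': "Z = P*Z'" using qZ qP by blast
    obtain Y' where Y': "Y = P*Y'" using qY qP by blast
    have "P*(X^2)^2 = P*(P*(Z'^2 + 41*P^2*Y'^4))" using eqP Z' Y'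
      by (simp add: algebra_simps power2_eq_square power4_eq_xxxx)
    then have "(X^2)^2 = P*(Z'^2 + 41*P^2*Y'^4)" using P1 by simp
    then have "P dvd (X^2)^2" by (metis dvd_triv_left)
    then have "P dvd X" using pi prime_dvd_power by blast
    then have "is_unit P" using qY qP cop coprime_common_divisor by blast
    then show False using P1 by simp
  qed
  then have copZW: "coprime Z (Y^2)" by simp
  have oddX: "odd X"
  proof
    assume eX: "even X"
    then have oY: "odd Y" using cop coprime_common_divisor[of X Y 2] by auto
    obtain X1 where X1: "X = 2*X1" using eX by blast
    have e16: "Z^2 + 41*(Y^2)^2 = 16*(P*X1^4)" using eqP X1
      by (simp add: algebra_simps power2_eq_square power4_eq_xxxx)
    have y4: "(Y^2)^2 mod 8 = 1" using odd_sq_mod8[of "Y^2"] oY by simp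
    have "odd ((Y^2)^2)" using oY by simp
    then have "odd (Z^2)"
    proof -
      have "Z^2 = 16*(P*X1^4) - 41*(Y^2)^2" using e16 by simp
      then show ?thesis using \<open>odd ((Y^2)^2)\<close> by simp
    qed
    then have "odd Z" by simp
    then have z2: "Z^2 mod 8 = 1" by (rule odd_sq_mod8)
    define A B C where "A = Z^2" "B = (Y^2)^2" "C = P*X1^4"
    have "A + 41*B = 16*C" "A mod 8 = 1" "B mod 8 = 1" using e16 z2 y4 A_B_C_def by simp_all
    then show False by presburger
  qed
  have "(a*Y^2 - b*Z)*(a*Y^2 + b*Z) = a^2*(Y^2)^2 - b^2*Z^2"
    by (simp add: algebra_simps power2_eq_square)
  also have "\<dots> = (5*P - 41*b^2)*(Y^2)^2 - b^2*(P*(X^2)^2 - 41*(Y^2)^2)"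
  proof -
    have a2: "a^2 = 5*P - 41*b^2" using ab P_def by simp
    have z2: "Z^2 = P*(X^2)^2 - 41*(Y^2)^2" using eqP by simp
    show ?thesis by (simp only: a2 z2)
  qed
  also have "\<dots> = P*(5*(Y^2)^2 - b^2*(X^2)^2)" by (simp add: algebra_simps)
  finally have "P dvd (a*Y^2 - b*Z)*(a*Y^2 + b*Z)" by (metis dvd_triv_left)
  then have "P dvd a*Y^2 - b*Z \<or> P dvd a*Y^2 + b*Z" using prime_factor_cases[OF pi] by blast
  then show False
  proof
    assume "P dvd a*Y^2 - b*Z"
    then show False using core[OF pp ab _ copZW oddX] eqP P_def by simp
  next
    assume "P dvd a*Y^2 + b*Z"
    moreover have "a^2 + 41*(-b)^2 = 5*int p" using ab by simp
    ultimately show False using core[OF pp _ _ copZW oddX, of a "-b"] eqP P_def by simp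
  qed
qed

lemma int_version:
  fixes p :: nat and m n X Y Z :: int
  assumes pp: "prime p" and pf: "int p = 5 * m^2 + 4 * m * n + 9 * n^2"
    and eq: "int p * X^4 - 41*Y^4 = Z^2"
  shows "X = 0 \<and> Y = 0"
proof (rule ccontr)
  assume nz: "\<not> (X = 0 \<and> Y = 0)"
  define g where "g = gcd X Y"
  have g0: "g \<noteq> 0" using nz g_def by simp
  obtain X1 Y1 where XY: "X = X1*g" "Y = Y1*g" and cop: "coprime X1 Y1"
    using gcd_coprime_exists[OF g0[unfolded g_def]] g_def by blast
  have Zg: "Z^2 = (g^2)^2 * (int p * X1^4 - 41*Y1^4)" using eq XY
    by (simp add: algebra_simps power2_eq_square power4_eq_xxxx)
  then have "(g^2)^2 dvd Z^2" by (metis dvd_triv_left)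
  then have "g^2 dvd Z" using pow_divides_pow_iff[of 2 "g^2" Z] by simp
  then obtain Z1 where Z1: "Z = g^2 * Z1" by blast
  have "(g^2)^2 * Z1^2 = (g^2)^2 * (int p * X1^4 - 41*Y1^4)" using Zg Z1
    by (simp add: power_mult_distrib)
  then have "int p * X1^4 - 41*Y1^4 = Z1^2" using g0 by simp
  then show False using main_int[OF pp pf _ cop] by blast
qed

theorem proposition1:
  fixes p :: nat and m n :: int
  assumes "prime p"
    and "int p = 5 * m^2 + 4 * m * n + 9 * n^2"
  shows "\<forall>x y z :: rat. of_nat p * x^4 - 41 * y^4 = z^2 \<longrightarrow> x = 0 \<and> y = 0 \<and> z = 0"
proof (intro allI impI)
  fix x y z :: rat
  assume h: "of_nat p * x^4 - 41 * y^4 = z^2"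
  obtain a1 b1 where x: "x = of_int a1 / of_int b1" and b1: "b1 > 0"
    by (cases x) (auto simp: Fract_of_int_quotient)
  obtain a2 b2 where y: "y = of_int a2 / of_int b2" and b2: "b2 > 0"
    by (cases y) (auto simp: Fract_of_int_quotient)
  obtain a3 b3 where z: "z = of_int a3 / of_int b3" and b3: "b3 > 0"
    by (cases z) (auto simp: Fract_of_int_quotient)
  define D where "D = b1*b2*b3"
  have D0: "D \<noteq> 0" using b1 b2 b3 D_def by simp
  define X Y Z where "X = a1*b2*b3" "Y = a2*b1*b3" "Z = a3*b3*b1^2*b2^2"
  have xX: "of_int X = x * of_int D" using b1 unfolding x X_Y_Z_def D_def by simp
  have yY: "of_int Y = y * of_int D" using b2 unfolding y X_Y_Z_def D_def by simp
  have zZ: "of_int Z = z * (of_int D)^2" using b3 unfolding z X_Y_Z_def D_def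
    by (simp add: power2_eq_square)
  have "(of_int (int p * X^4 - 41*Y^4 - Z^2) :: rat)
      = (of_int D)^4 * (of_nat p * x^4 - 41 * y^4 - z^2)"
    by (simp add: xX yY zZ algebra_simps power2_eq_square power4_eq_xxxx)
  also have "\<dots> = 0" using h by simp
  finally have "int p * X^4 - 41*Y^4 - Z^2 = 0" by (simp only: of_int_eq_0_iff)
  then have "int p * X^4 - 41*Y^4 = Z^2" by simp
  from int_version[OF assms this] have "X = 0" "Y = 0" by auto
  then have "x = 0" "y = 0" using xX yY D0 by auto
  moreover have "z = 0" using h \<open>x = 0\<close> \<open>y = 0\<close> by simp
  ultimately show "x = 0 \<and> y = 0 \<and> z = 0" by simp
qed

end
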